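(* Consider an instance of the destructive weighted-\$-protection problem and let $\mathcal{V}_F\subseteq\mathcal{V}$ be a set of awarded voters. Suppose the attacker succeeds (i.e., makes some candidate $c\neq c_m$ obtain a total score strictly higher than $c_m$) by bribing a set $\mathcal{V}_B\subseteq\mathcal{V}\setminus\mathcal{V}_F$ with $\sum_{v_j\in\mathcal{V}_B}p_j^b\le B$. If $v_{j'}\prec v_j$, $v_{j'}\in\mathcal{V}_B$ and $v_j\notin\mathcal{V}_F\cup\mathcal{V}_B$, then the attacker can also succeed by bribing $(\mathcal{V}_B\setminus\{v_{j'}\})\cup\{v_j\}$ (within budget $B$).
   Context: Election model. Candidates $\mathcal{C}=\{c_1,\dots,c_m\}$, voters $\mathcal{V}=\{v_1,\dots,v_n\}$; voter $v_j$ has a preference list $\tau_j$ (a linear order of $\mathcal{C}$), weight $w_j\in\mathbb{Z}_{>0}$, awarding price $p_j^a\in\mathbb{Z}_{>0}$, bribing price $p_j^b\in\mathbb{Z}_{>0}$. A scoring rule $\alpha=(\alpha_1\ge\cdots\ge\alpha_m)$ of nonnegative integers gives the candidate at position $z$ of $v_j$'s list $w_j\alpha_z$ points; total score is the sum over voters. In the destructive weighted-\$-protection problem, $c_m$ has maximum total score without bribery; there is a defense budget $F$ and an attack budget $B$; the attacker may choose $\mathcal{V}_B\subseteq\mathcal{V}\setminus\mathcal{V}_F$ with total bribing price at most $B$ and replace each list in $\mathcal{V}_B$ by an arbitrary list; it succeeds if some $c\neq c_m$ gets a strictly higher total score than $c_m$. Dominance: $v_{j'}\prec v_j$ ($v_j$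 dominates $v_{j'}$) if either (i) $\tau_j=\tau_{j'}$, $w_j\ge w_{j'}$, $p_j^a\le p_{j'}^a$, $p_j^b\le p_{j'}^b$ with at least one of these three inequalities strict; or (ii) $\tau_j=\tau_{j'}$, $w_j=w_{j'}$, $p_j^a=p_{j'}^a$, $p_j^b=p_{j'}^b$ and $j'<j$. *)

theory Defs
  imports Main
begin

text \<open>Candidates are 1..m, the distinguished candidate c_m is m.
  Voters are 1..n. A preference list is a list of candidates (position z, 1-indexed,
  is element z-1), a linear order of all candidates.\<close>

definition is_pref :: "nat \<Rightarrow> nat list \<Rightarrow> bool" where
  "is_pref m l \<longleftrightarrow> distinct l \<and> set l = {1..m}"

definition vote_points :: "(nat \<Rightarrow> nat) \<Rightarrow> nat list \<Rightarrow> nat \<Rightarrow> nat" where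
  "vote_points alpha l c = (\<Sum>z<length l. if l ! z = c then alpha (Suc z) else 0)"

definition total_score ::
  "(nat \<Rightarrow> nat) \<Rightarrow> (nat \<Rightarrow> nat) \<Rightarrow> (nat \<Rightarrow> nat list) \<Rightarrow> nat \<Rightarrow> nat \<Rightarrow> nat" where
  "total_score alpha w tau n c = (\<Sum>j\<in>{1..n}. w j * vote_points alpha (tau j) c)"

definition attack_succeeds ::
  "nat \<Rightarrow> nat \<Rightarrow> (nat \<Rightarrow> nat) \<Rightarrow> (nat \<Rightarrow> nat) \<Rightarrow> (nat \<Rightarrow> nat list) \<Rightarrow> nat set \<Rightarrow> bool" where
  "attack_succeeds m n alpha w tau VB \<longleftrightarrow>
     (\<exists>tau'. (\<forall>j. j \<notin> VB \<longrightarrow> tau' j = tau j) \<and> (\<forall>j\<in>VB. is_pref m (tau' j)) \<and>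
        (\<exists>c\<in>{1..m}. c \<noteq> m \<and> total_score alpha w tau' n c > total_score alpha w tau' n m))"

text \<open>dominated tau w pa pb j' j means v_j' \<prec> v_j (v_j dominates v_j').\<close>
definition dominated ::
  "(nat \<Rightarrow> nat list) \<Rightarrow> (nat \<Rightarrow> nat) \<Rightarrow> (nat \<Rightarrow> nat) \<Rightarrow> (nat \<Rightarrow> nat) \<Rightarrow> nat \<Rightarrow> nat \<Rightarrow> bool" where
  "dominated tau w pa pb j' j \<longleftrightarrow>
     (tau j = tau j' \<and> w j \<ge> w j' \<and> pa j \<le> pa j' \<and> pb j \<le> pb j' \<and>
        (w j > w j' \<or> pa j < pa j' \<or> pb j < pb j'))
   \<or> (tau j = tau j' \<and> w j = w j' \<and> pa j = pa j' \<and> pb j = pb j' \<and> j' < j)"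

end

theory Submission
  imports Defs
begin

lemma vp_at:
  assumes "distinct l" "z < length l" "l ! z = c"
  shows "vote_points alpha l c = alpha (Suc z)"
proof -
  have "(\<Sum>z'<length l. if l ! z' = c then alpha (Suc z') else 0)
      = (\<Sum>z'<length l. if z' = z then alpha (Suc z') else 0)"
    using assms by (intro sum.cong) (auto simp: nth_eq_iff_index_eq)
  also have "\<dots> = alpha (Suc z)" using assms by simp
  finally show ?thesis unfolding vote_points_def .
qed

lemma pref_len: "is_pref m l \<Longrightarrow> length l = m"
  unfolding is_pref_def by (metis card_atLeastAtMost diff_Suc_1 distinct_card)

lemma vp_bounds:
  assumes alpha_mono: "\<And>z z'. 1 \<le> z \<Longrightarrow> z \<le> z' \<Longrightarrow> z' \<le> m \<Longrightarrow> alpha z' \<le> alpha z"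
    and p: "is_pref m l" and c: "c \<in> {1..m}"
  shows "alpha m \<le> vote_points alpha l c \<and> vote_points alpha l c \<le> alpha 1"
proof -
  have len: "length l = m" using pref_len[OF p] .
  from c p obtain z where z: "z < length l" "l ! z = c"
    unfolding is_pref_def by (metis in_set_conv_nth)
  have "vote_points alpha l c = alpha (Suc z)"
    using vp_at[OF _ z] p unfolding is_pref_def by simp
  moreover have "alpha m \<le> alpha (Suc z)" using alpha_mono[of "Suc z" m] z len by simp
  moreover have "alpha (Suc z) \<le> alpha 1" using alpha_mono[of 1 "Suc z"] z len by simp
  ultimately show ?thesis by simp
qed

theorem lemma5:
  fixes m n :: nat and alpha :: "nat \<Rightarrow> nat"
    and tau :: "nat \<Rightarrow> nat list" and w pa pb :: "nat \<Rightarrow> nat"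
    and F B :: nat and VF VB :: "nat set" and j j' :: nat
  assumes m_pos: "m \<ge> 1"
    and alpha_mono: "\<And>z z'. 1 \<le> z \<Longrightarrow> z \<le> z' \<Longrightarrow> z' \<le> m \<Longrightarrow> alpha z' \<le> alpha z"
    and prefs: "\<And>i. i \<in> {1..n} \<Longrightarrow> is_pref m (tau i)"
    and w_pos: "\<And>i. i \<in> {1..n} \<Longrightarrow> w i > 0"
    and pa_pos: "\<And>i. i \<in> {1..n} \<Longrightarrow> pa i > 0"
    and pb_pos: "\<And>i. i \<in> {1..n} \<Longrightarrow> pb i > 0"
    and cm_max: "\<And>c. c \<in> {1..m} \<Longrightarrow> total_score alpha w tau n c \<le> total_score alpha w tau n m"
    and VF_sub: "VF \<subseteq> {1..n}"
    and VF_budget: "sum pa VF \<le> F"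
    and VB_sub: "VB \<subseteq> {1..n} - VF"
    and VB_budget: "sum pb VB \<le> B"
    and succ: "attack_succeeds m n alpha w tau VB"
    and dom: "dominated tau w pa pb j' j"
    and j'_in: "j' \<in> VB"
    and j_in: "j \<in> {1..n}"
    and j_out: "j \<notin> VF \<union> VB"
  shows "(VB - {j'}) \<union> {j} \<subseteq> {1..n} - VF
    \<and> sum pb ((VB - {j'}) \<union> {j}) \<le> B
    \<and> attack_succeeds m n alpha w tau ((VB - {j'}) \<union> {j})"
proof (intro conjI)
  show "(VB - {j'}) \<union> {j} \<subseteq> {1..n} - VF" using VB_sub j_in j_out by auto
  have jj: "j \<noteq> j'" using j'_in j_out by auto
  have j'n: "j' \<in> {1..n}" using VB_sub j'_in by auto
  have fin: "finite VB" using VB_sub finite_subset by blast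
  have pbj: "pb j \<le> pb j'" using dom unfolding dominated_def by auto
  have Tj: "tau j = tau j'" using dom unfolding dominated_def by auto
  have wj: "w j' \<le> w j" using dom unfolding dominated_def by auto
  have "sum pb ((VB - {j'}) \<union> {j}) = sum pb (VB - {j'}) + pb j"
    using fin j_out by (simp add: sum.union_disjoint)
  moreover have "sum pb VB = sum pb (VB - {j'}) + pb j'"
    using fin j'_in by (metis add.commute sum.remove)
  ultimately show "sum pb ((VB - {j'}) \<union> {j}) \<le> B" using pbj VB_budget by linarith
  from succ obtain tau' c where t1: "\<forall>i. i \<notin> VB \<longrightarrow> tau' i = tau i"
      and t2: "\<forall>i\<in>VB. is_pref m (tau' i)" and c: "c \<in> {1..m}" "c \<noteq> m"
      and sc: "total_score alpha w tau' n c > total_score alpha w tau' n m"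
    unfolding attack_succeeds_def by blast
  define L where "L = c # filter (\<lambda>x. x \<noteq> c \<and> x \<noteq> m) [1..<m+1] @ [m]"
  have Lp: "is_pref m L" using c m_pos unfolding L_def is_pref_def by auto
  have lenL: "length L = m" using pref_len[OF Lp] .
  have m2: "m \<ge> 2" using c by auto
  have "L ! 0 = c" unfolding L_def by simp
  hence vLc: "vote_points alpha L c = alpha 1"
    using vp_at[of L 0 c alpha] Lp lenL m2 unfolding is_pref_def by simp
  have "L ! (m - 1) = m" using lenL unfolding L_def
    by (metis append_Cons last_conv_nth last_snoc list.distinct(1))
  hence vLm: "vote_points alpha L m = alpha m"
    using vp_at[of L "m-1" m alpha] Lp lenL m2 unfolding is_pref_def by simp
  define tau'' where "tau'' = tau'(j := L, j' := tau j')"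
  let ?d = "\<lambda>t i. int (w i) * (int (vote_points alpha (t i) c) - int (vote_points alpha (t i) m))"
  have G: "\<And>t. int (total_score alpha w t n c) - int (total_score alpha w t n m) = (\<Sum>i\<in>{1..n}. ?d t i)"
    unfolding total_score_def by (simp add: sum_subtractf algebra_simps)
  define R where "R = {1..n} - {j, j'}"
  have split: "\<And>t. (\<Sum>i\<in>{1..n}. ?d t i) = (\<Sum>i\<in>R. ?d t i) + ?d t j + ?d t j'"
  proof -
    fix t
    have e: "{1..n} = insert j (insert j' R)" using j_in j'n unfolding R_def by auto
    have "finite R" "j \<notin> R" "j' \<notin> R" unfolding R_def by auto
    hence "(\<Sum>i\<in>insert j (insert j' R). ?d t i) = ?d t j + (?d t j' + (\<Sum>i\<in>R. ?d t i))"
      using jj by (simp add: sum.insert)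
    thus "(\<Sum>i\<in>{1..n}. ?d t i) = (\<Sum>i\<in>R. ?d t i) + ?d t j + ?d t j'"
      unfolding e by simp
  qed
  have same: "(\<Sum>i\<in>R. ?d tau'' i) = (\<Sum>i\<in>R. ?d tau' i)"
    unfolding R_def tau''_def by (intro sum.cong) auto
  have pT: "is_pref m (tau j')" using prefs j'n .
  have pL': "is_pref m (tau' j')" using t2 j'_in by auto
  have t'j: "tau' j = tau j'" using t1 j_out Tj by auto
  have mm: "m \<in> {1..m}" using m_pos by simp
  have bT: "int (vote_points alpha (tau j') c) - int (vote_points alpha (tau j') m) \<le> int (alpha 1) - int (alpha m)"
    using vp_bounds[OF alpha_mono pT c(1)] vp_bounds[OF alpha_mono pT mm] by force
  have bL: "int (vote_points alpha (tau' j') c) - int (vote_points alpha (tau' j') m) \<le> int (alpha 1) - int (alpha m)"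
    using vp_bounds[OF alpha_mono pL' c(1)] vp_bounds[OF alpha_mono pL' mm] by force
  have dj'': "?d tau'' j = int (w j) * (int (alpha 1) - int (alpha m))"
    unfolding tau''_def using jj vLc vLm by simp
  have dj''': "?d tau'' j' = int (w j') * (int (vote_points alpha (tau j') c) - int (vote_points alpha (tau j') m))"
    unfolding tau''_def by simp
  have dj': "?d tau' j = int (w j) * (int (vote_points alpha (tau j') c) - int (vote_points alpha (tau j') m))"
    using t'j by simp
  define A where "A = int (alpha 1) - int (alpha m)"
  define dT where "dT = int (vote_points alpha (tau j') c) - int (vote_points alpha (tau j') m)"
  define dL where "dL = int (vote_points alpha (tau' j') c) - int (vote_points alpha (tau' j') m)"
  have ineq: "int (w j) * A + int (w j') * dT \<ge> int (w j) * dT + int (w j') * dL"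
  proof -
    have "int (w j) * (A - dT) \<ge> int (w j') * (A - dT)"
      using wj bT unfolding A_def dT_def by (intro mult_right_mono) auto
    moreover have "int (w j') * (A - dL) \<ge> 0" using bL unfolding A_def dL_def by simp
    ultimately show ?thesis by (simp add: algebra_simps)
  qed
  have "(\<Sum>i\<in>{1..n}. ?d tau'' i) \<ge> (\<Sum>i\<in>{1..n}. ?d tau' i)"
    using split[of tau''] split[of tau'] same dj'' dj''' dj' ineq
    unfolding A_def dT_def dL_def by simp
  moreover have "(\<Sum>i\<in>{1..n}. ?d tau' i) > 0" using G[of tau'] sc by simp
  ultimately have "int (total_score alpha w tau'' n c) - int (total_score alpha w tau'' n m) > 0"
    using G[of tau''] by linarith
  hence sc'': "total_score alpha w tau'' n c > total_score alpha w tau'' n m" by simp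
  show "attack_succeeds m n alpha w tau ((VB - {j'}) \<union> {j})"
    unfolding attack_succeeds_def
  proof (intro exI conjI)
    show "\<forall>i. i \<notin> VB - {j'} \<union> {j} \<longrightarrow> tau'' i = tau i"
      unfolding tau''_def using t1 by auto
    show "\<forall>i\<in>VB - {j'} \<union> {j}. is_pref m (tau'' i)"
      unfolding tau''_def using t2 Lp jj by auto
    show "\<exists>c\<in>{1..m}. c \<noteq> m \<and> total_score alpha w tau'' n m < total_score alpha w tau'' n c"
      using c sc'' by blast
  qed
qed

end
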